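(* For every $\bar x\in\mathcal{X}$, $$\operatorname{proj}_\theta(\widehat{\mathrm{SRI}}(\bar x))=\Big\{\theta\in\mathbb{R}^{V_+}_{\ge0}:\sum_{v\in V_+:w_v>0}\phi_v(\alpha,\beta)\theta_v\ge\sum_{\xi\in[N]}\sum_{\emptyset\ne S\subseteq V_+}\alpha^\xi_S\bar x(E(S))+\nu(\alpha,\beta)\ \ \forall(\alpha,\beta)\in\mathcal{A}\Big\}.$$ Consequently, $\mathcal{P}$ equals the set of $(x,\theta)\in\mathcal{X}\times\mathbb{R}^{V_+}_{\ge0}$ satisfying $\sum_{v:w_v>0}\phi_v(\alpha,\beta)\theta_v\ge\sum_\xi\sum_S\alpha^\xi_Sx(E(S))+\nu(\alpha,\beta)$ for all $(\alpha,\beta)\in\mathcal{A}$.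
   Context: $G=(V,E)$ complete undirected graph, $V=\{0\}\cup V_+$ ($V_+$ customers); capacity $C>0$; scenarios $\xi\in[N]$ with demands $d^\xi\in\mathbb{Q}^{V_+}_{\ge0}$ ($d^\xi(v)\le C$) and probabilities $p_\xi\ge0$, $\sum_\xi p_\xi=1$. $f(S)=\sum_{i\in S}f(i)$; $k_\xi(S)=\lceil d^\xi(S)/C\rceil$; $\bar d=\sum_\xi p_\xi d^\xi$; $E(S)$: edges with both ends in $S$; $\delta(S)$: edges with exactly one end in $S$. $\mathcal{X}$ is one of $\mathcal{X}_{\mathrm{sub}}=\{x\in[0,2]^E: x(\delta(v))=2\ \forall v\in V_+,\ x(E(S))\le|S|-1\ \forall\emptyset\ne S\subseteq V_+\}$ or $\mathcal{X}_{\mathrm{cvrp}}=\mathcal{X}_{\mathrm{sub}}\cap\{x:x(\delta(0))=2k,\ x(E(S))\le|S|-\lceil\bar d(S)/C\rceil\}$. Fixed $w\in\mathbb{Q}^{V_+}_{\ge0}$, $b\in\mathbb{Z}^{V_+}_{\ge0}$; $y\in\mathbb{R}^{[N]\times V_+}$ has entries $y^\xi_v$; $[\mathbf 0,b]^N=\{y:0\le y^\xi_v\le b_v\}$. For $\bar x\in\mathcal{X}$, $\widehat{\mathrm{SRI}}(\bar x)$ is the set of $(\theta,y)\in\mathbb{R}^{V_+}_{\ge0}\times[\mathbf 0,b]^N$ with $y^\xi(S)\ge k_\xi(S)+\bar x(E(S))-|S|$ for all $\emptyset\ne S\subseteq V_+$, $\xi\in[N]$, and $\theta_v\ge\sum_\xi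 p_\xi w_vy^\xi_v$ for all $v$; $\operatorname{proj}_\theta$ is projection onto $\theta$; $\mathcal{P}=\{(x,\theta):x\in\mathcal{X},\theta\in\operatorname{proj}_\theta(\widehat{\mathrm{SRI}}(x))\}$. Multipliers $\alpha=(\alpha^\xi_S)_{\xi,\emptyset\ne S\subseteq V_+}$, $\beta=(\beta^\xi_v)_{\xi,v}$. $\nu(\alpha,\beta)=\sum_\xi\sum_S\alpha^\xi_S(k_\xi(S)-|S|)+\sum_\xi\sum_v\beta^\xi_vb_v$. For $w_v>0$, $\phi_v(\alpha,\beta)=\big(\max_{\xi}\frac{\beta^\xi_v+\sum_{S\ni v}\alpha^\xi_S}{p_\xi w_v}\big)^+$ with $(a)^+=\max\{a,0\}$. $\mathcal{A}$ is the set of $(\alpha,\beta)$ with $\alpha\ge0$, $\beta\le0$, and $\beta^\xi_v+\sum_{S\ni v}\alpha^\xi_S\le0$ for all $\xi$ and all $v$ with $w_v=0$. *)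

theory Defs
  imports Complex_Main
begin

text \<open>Customers V+ are the elements of a finite type 'c; the vertex set is
  'c option, with None the depot 0 and Some v the customer v. Scenarios [N] are the
  elements of a finite (hence nonempty) type 's. Edges of the complete graph are
  two-element sets of vertices; a vector in R^E is a function on vertex sets which is
  0 outside E. A vector in R^{V+} is a function 'c => real, y in R^{[N] x V+} is
  a function 's => 'c => real with y xi v = y^xi_v.\<close>

definition edges :: "'c option set set" where
  "edges = {e. \<exists>u v. u \<noteq> v \<and> e = {u, v}}"

definition xE :: "('c option set \<Rightarrow> real) \<Rightarrow> 'c set \<Rightarrow> real" where
  "xE x S = (\<Sum>e\<in>{e\<in>edges. e \<subseteq> Some ` S}. x e)"

definition xdelta :: "('c option set \<Rightarrow> real) \<Rightarrow> 'c option set \<Rightarrow> real" where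
  "xdelta x T = (\<Sum>e\<in>{e\<in>edges. card (e \<inter> T) = 1}. x e)"

definition Xsub :: "('c::finite option set \<Rightarrow> real) set" where
  "Xsub = {x. (\<forall>e. e \<notin> edges \<longrightarrow> x e = 0)
             \<and> (\<forall>e\<in>edges. 0 \<le> x e \<and> x e \<le> 2)
             \<and> (\<forall>v. xdelta x {Some v} = 2)
             \<and> (\<forall>S. S \<noteq> {} \<longrightarrow> xE x S \<le> real (card S) - 1)}"

definition dbar :: "('s::finite \<Rightarrow> real) \<Rightarrow> ('s \<Rightarrow> 'c \<Rightarrow> real) \<Rightarrow> 'c set \<Rightarrow> real" where
  "dbar p d S = (\<Sum>\<xi>\<in>UNIV. p \<xi> * (\<Sum>v\<in>S. d \<xi> v))"

definition Xcvrp :: "('s::finite \<Rightarrow> real) \<Rightarrow> ('s \<Rightarrow> 'c::finite \<Rightarrow> real) \<Rightarrow> real \<Rightarrow> nat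
                      \<Rightarrow> ('c option set \<Rightarrow> real) set" where
  "Xcvrp p d C k = Xsub \<inter> {x. xdelta x {None} = 2 * real k
       \<and> (\<forall>S. S \<noteq> {} \<longrightarrow> xE x S \<le> real (card S) - of_int \<lceil>dbar p d S / C\<rceil>)}"

definition kk :: "('s \<Rightarrow> 'c \<Rightarrow> real) \<Rightarrow> real \<Rightarrow> 's \<Rightarrow> 'c set \<Rightarrow> int" where
  "kk d C \<xi> S = \<lceil>(\<Sum>v\<in>S. d \<xi> v) / C\<rceil>"

definition SRI :: "('s::finite \<Rightarrow> real) \<Rightarrow> ('s \<Rightarrow> 'c::finite \<Rightarrow> real) \<Rightarrow> real
                   \<Rightarrow> ('c \<Rightarrow> real) \<Rightarrow> ('c \<Rightarrow> nat) \<Rightarrow> ('c option set \<Rightarrow> real)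
                   \<Rightarrow> (('c \<Rightarrow> real) \<times> ('s \<Rightarrow> 'c \<Rightarrow> real)) set" where
  "SRI p d C w b xbar = {(\<theta>, y).
      (\<forall>v. 0 \<le> \<theta> v)
    \<and> (\<forall>\<xi> v. 0 \<le> y \<xi> v \<and> y \<xi> v \<le> real (b v))
    \<and> (\<forall>\<xi> S. S \<noteq> {} \<longrightarrow>
          (\<Sum>v\<in>S. y \<xi> v) \<ge> of_int (kk d C \<xi> S) + xE xbar S - real (card S))
    \<and> (\<forall>v. \<theta> v \<ge> (\<Sum>\<xi>\<in>UNIV. p \<xi> * w v * y \<xi> v))}"

definition proj_theta :: "(('c \<Rightarrow> real) \<times> 'y) set \<Rightarrow> ('c \<Rightarrow> real) set" where
  "proj_theta A = fst ` A"

definition Pset :: "('c option set \<Rightarrow> real) set \<Rightarrow> ('s::finite \<Rightarrow> real)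
                    \<Rightarrow> ('s \<Rightarrow> 'c::finite \<Rightarrow> real) \<Rightarrow> real \<Rightarrow> ('c \<Rightarrow> real) \<Rightarrow> ('c \<Rightarrow> nat)
                    \<Rightarrow> (('c option set \<Rightarrow> real) \<times> ('c \<Rightarrow> real)) set" where
  "Pset X p d C w b = {(x, \<theta>). x \<in> X \<and> \<theta> \<in> proj_theta (SRI p d C w b x)}"

definition nu :: "('s::finite \<Rightarrow> 'c::finite \<Rightarrow> real) \<Rightarrow> real \<Rightarrow> ('c \<Rightarrow> nat)
                  \<Rightarrow> ('s \<Rightarrow> 'c set \<Rightarrow> real) \<Rightarrow> ('s \<Rightarrow> 'c \<Rightarrow> real) \<Rightarrow> real" where
  "nu d C b \<alpha> \<beta> =
     (\<Sum>\<xi>\<in>UNIV. \<Sum>S\<in>{S. S \<noteq> {}}. \<alpha> \<xi> S * (of_int (kk d C \<xi> S) - real (card S)))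
   + (\<Sum>\<xi>\<in>UNIV. \<Sum>v\<in>UNIV. \<beta> \<xi> v * real (b v))"

text \<open>phi_v(alpha, beta), used only for w_v > 0\<close>
definition phi :: "('s::finite \<Rightarrow> real) \<Rightarrow> ('c::finite \<Rightarrow> real) \<Rightarrow> 'c
                   \<Rightarrow> ('s \<Rightarrow> 'c set \<Rightarrow> real) \<Rightarrow> ('s \<Rightarrow> 'c \<Rightarrow> real) \<Rightarrow> real" where
  "phi p w v \<alpha> \<beta> = max 0 (Max ((\<lambda>\<xi>. (\<beta> \<xi> v + (\<Sum>S\<in>{S. v \<in> S}. \<alpha> \<xi> S)) / (p \<xi> * w v)) ` UNIV))"

definition Aset :: "('c::finite \<Rightarrow> real) \<Rightarrow> (('s \<Rightarrow> 'c set \<Rightarrow> real) \<times> ('s \<Rightarrow> 'c \<Rightarrow> real)) set" where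
  "Aset w = {(\<alpha>, \<beta>).
      (\<forall>\<xi> S. S \<noteq> {} \<longrightarrow> 0 \<le> \<alpha> \<xi> S)
    \<and> (\<forall>\<xi> v. \<beta> \<xi> v \<le> 0)
    \<and> (\<forall>\<xi> v. w v = 0 \<longrightarrow> \<beta> \<xi> v + (\<Sum>S\<in>{S. v \<in> S}. \<alpha> \<xi> S) \<le> 0)}"

definition cutset :: "('s::finite \<Rightarrow> real) \<Rightarrow> ('s \<Rightarrow> 'c::finite \<Rightarrow> real) \<Rightarrow> real
                      \<Rightarrow> ('c \<Rightarrow> real) \<Rightarrow> ('c \<Rightarrow> nat) \<Rightarrow> ('c option set \<Rightarrow> real)
                      \<Rightarrow> ('c \<Rightarrow> real) set" where
  "cutset p d C w b x = {\<theta>. (\<forall>v. 0 \<le> \<theta> v) \<and>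
     (\<forall>(\<alpha>, \<beta>) \<in> Aset w.
        (\<Sum>v\<in>{v. w v > 0}. phi p w v \<alpha> \<beta> * \<theta> v)
          \<ge> (\<Sum>\<xi>\<in>UNIV. \<Sum>S\<in>{S. S \<noteq> {}}. \<alpha> \<xi> S * xE x S) + nu d C b \<alpha> \<beta>)}"

end

theory Submission
  imports Defs "HOL-Analysis.Analysis"
begin


lemma farkas_fun:
  fixes A :: "'i \<Rightarrow> 'j::finite \<Rightarrow> real" and c :: "'i \<Rightarrow> real" and I :: "'i set"
  assumes fin: "finite I"
    and H: "\<And>l. (\<forall>i\<in>I. 0 \<le> l i) \<Longrightarrow> (\<forall>j. (\<Sum>i\<in>I. l i * A i j) = 0) \<Longrightarrow> (\<Sum>i\<in>I. l i * c i) \<le> 0"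
  shows "\<exists>y::'j\<Rightarrow>real. \<forall>i\<in>I. (\<Sum>j\<in>UNIV. A i j * y j) \<ge> c i"
proof -
  define u :: "'i \<Rightarrow> (real^'j) \<times> real" where "u i = (vec_lambda (A i), c i)" for i
  define K where "K = {(\<Sum>i\<in>I. l i *\<^sub>R u i) | l. \<forall>i\<in>I. 0 \<le> l i}"
  have cK: "convex_cone K"
    unfolding convex_cone_iff
  proof (intro conjI ballI allI impI)
    show "0 \<in> K" unfolding K_def by (rule CollectI, rule exI[of _ "\<lambda>i. 0"]) auto
  next
    fix x y assume "x \<in> K" "y \<in> K"
    then obtain l m where l: "x = (\<Sum>i\<in>I. l i *\<^sub>R u i)" "\<forall>i\<in>I. 0 \<le> l i"
      and m: "y = (\<Sum>i\<in>I. m i *\<^sub>R u i)" "\<forall>i\<in>I. 0 \<le> m i" unfolding K_def by blast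
    have "x + y = (\<Sum>i\<in>I. (l i + m i) *\<^sub>R u i)" using l m by (simp add: scaleR_add_left sum.distrib)
    then show "x + y \<in> K" unfolding K_def using l m by (auto intro!: exI[of _ "\<lambda>i. l i + m i"])
  next
    fix x and r :: real assume "x \<in> K" "0 \<le> r"
    then obtain l where l: "x = (\<Sum>i\<in>I. l i *\<^sub>R u i)" "\<forall>i\<in>I. 0 \<le> l i" unfolding K_def by blast
    have "r *\<^sub>R x = (\<Sum>i\<in>I. (r * l i) *\<^sub>R u i)" using l by (simp add: scaleR_sum_right)
    then show "r *\<^sub>R x \<in> K" unfolding K_def using l \<open>0 \<le> r\<close> by (auto intro!: exI[of _ "\<lambda>i. r * l i"])
  qed
  have uK: "u ` I \<subseteq> K"
  proof
    fix x assume "x \<in> u ` I"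
    then obtain k where k: "k \<in> I" "x = u k" by auto
    have "x = (\<Sum>i\<in>I. (if i = k then 1 else 0) *\<^sub>R u i)" using k fin
      by (simp add: if_distrib[of "\<lambda>t. t *\<^sub>R _"] sum.delta cong: if_cong)
    then show "x \<in> K" unfolding K_def by (auto intro!: exI[of _ "\<lambda>i. if i = k then 1 else 0"])
  qed
  have hK: "convex_cone hull (u ` I) \<subseteq> K"
    using uK cK by (rule hull_minimal)
  define z :: "(real^'j) \<times> real" where "z = (0, 1)"
  have zn: "z \<notin> convex_cone hull (u ` I)"
  proof
    assume "z \<in> convex_cone hull (u ` I)"
    then have "z \<in> K" using hK by blast
    then obtain l where l: "z = (\<Sum>i\<in>I. l i *\<^sub>R u i)" "\<forall>i\<in>I. 0 \<le> l i" unfolding K_def by blast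
    have f: "fst z = (\<Sum>i\<in>I. l i *\<^sub>R vec_lambda (A i))" using l(1) by (simp add: fst_sum u_def)
    have s: "snd z = (\<Sum>i\<in>I. l i * c i)" using l(1) by (simp add: snd_sum u_def)
    have "\<forall>j. (\<Sum>i\<in>I. l i * A i j) = 0"
    proof
      fix j
      have "fst z $ j = 0" by (simp add: z_def)
      then show "(\<Sum>i\<in>I. l i * A i j) = 0" using f by (simp add: sum_component)
    qed
    with H l(2) have "(\<Sum>i\<in>I. l i * c i) \<le> 0" by blast
    with s show False by (simp add: z_def)
  qed
  obtain a s where as: "inner a z < s" "\<forall>x\<in>convex_cone hull (u ` I). inner a x > s"
    using separating_hyperplane_closed_point[OF convex_convex_cone_hull closed_convex_cone_hull[OF finite_imageI[OF fin]] zn]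
    by blast
  have s0: "s < 0" using as(2) convex_cone_hull_contains_0 by fastforce
  have nn: "inner a (u i) \<ge> 0" if "i \<in> I" for i
  proof (rule ccontr)
    assume neg: "\<not> inner a (u i) \<ge> 0"
    define r where "r = 2 * s / inner a (u i)"
    have r0: "0 \<le> r" using neg s0 unfolding r_def by (simp add: divide_nonpos_neg)
    have "r *\<^sub>R u i \<in> convex_cone hull (u ` I)"
      by (rule convex_cone_hull_mul[OF hull_inc r0]) (use that in auto)
    then have "inner a (r *\<^sub>R u i) > s" using as(2) by blast
    moreover have "inner a (r *\<^sub>R u i) = 2 * s" using neg unfolding r_def by simp
    ultimately show False using s0 by simp
  qed
  obtain h t where ht: "a = (h, t)" by (cases a)
  have t0: "t < 0" using as(1) s0 by (simp add: ht z_def)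
  define y where "y j = h $ j / (- t)" for j
  have "\<forall>i\<in>I. (\<Sum>j\<in>UNIV. A i j * y j) \<ge> c i"
  proof
    fix i assume "i \<in> I"
    from nn[OF this] have e: "inner h (vec_lambda (A i)) + t * c i \<ge> 0" by (simp add: ht u_def)
    have "(\<Sum>j\<in>UNIV. A i j * y j) = inner h (vec_lambda (A i)) / (- t)"
      by (simp add: y_def inner_vec_def sum_divide_distrib mult.commute sum_negf)
    also have "\<dots> \<ge> c i"
    proof -
      have "c i * (- t) \<le> inner h (vec_lambda (A i))" using e by (simp add: algebra_simps)
      moreover have "0 < - t" using t0 by simp
      ultimately show ?thesis by (simp only: pos_le_divide_eq)
    qed
    finally show "(\<Sum>j\<in>UNIV. A i j * y j) \<ge> c i" .
  qed
  then show ?thesis by blast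
qed



lemma sum_UNIV_prod:
  "(\<Sum>j\<in>(UNIV::('a::finite\<times>'b::finite) set). g j) = (\<Sum>a\<in>UNIV. \<Sum>b\<in>UNIV. g (a,b))"
  by (simp add: sum.cartesian_product UNIV_Times_UNIV[symmetric] del: UNIV_Times_UNIV)

lemma sum_UNIV_sum:
  "(\<Sum>j\<in>(UNIV::('a::finite+'b::finite) set). g j) = (\<Sum>a\<in>UNIV. g (Inl a)) + (\<Sum>b\<in>UNIV. g (Inr b))"
  using sum.Plus[of "UNIV::'a set" "UNIV::'b set" g] by (simp add: comp_def)

lemma xE_empty: "xE x {} = 0"
proof -
  have "{e \<in> edges. e \<subseteq> Some ` {}} = {}" by (auto simp: edges_def)
  then show ?thesis unfolding xE_def by (metis sum.empty)
qed

lemma kk_empty: "kk d C \<xi> {} = 0"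
  by (simp add: kk_def)

lemma swap_sets:
  fixes f :: "'c::finite set \<Rightarrow> 'c \<Rightarrow> real"
  shows "(\<Sum>S\<in>{S. S \<noteq> {}}. \<Sum>v\<in>S. f S v) = (\<Sum>v\<in>UNIV. \<Sum>S\<in>{S. v \<in> S}. f S v)"
proof -
  have "(\<Sum>S\<in>{S. S \<noteq> {}}. \<Sum>v\<in>S. f S v) = (\<Sum>S\<in>{S. S \<noteq> {}}. \<Sum>v\<in>{v\<in>UNIV. v \<in> S}. f S v)"
    by simp
  also have "\<dots> = (\<Sum>v\<in>UNIV. \<Sum>S\<in>{S\<in>{S. S \<noteq> {}}. v \<in> S}. f S v)"
    by (rule sum.swap_restrict) auto
  also have "\<dots> = (\<Sum>v\<in>UNIV. \<Sum>S\<in>{S. v \<in> S}. f S v)"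
    by (rule sum.cong) (auto intro!: sum.cong)
  finally show ?thesis .
qed

lemma fwd:
  fixes p :: "'s::finite \<Rightarrow> real" and d :: "'s \<Rightarrow> 'c::finite \<Rightarrow> real"
  assumes p_pos: "\<forall>\<xi>. 0 < p \<xi>" and w_nonneg: "\<forall>v. 0 \<le> w v"
    and SR: "(\<theta>, y) \<in> SRI p d C w b x"
    and AB: "(\<alpha>, \<beta>) \<in> Aset w"
  shows "(\<Sum>v\<in>{v. w v > 0}. phi p w v \<alpha> \<beta> * \<theta> v)
          \<ge> (\<Sum>\<xi>\<in>UNIV. \<Sum>S\<in>{S. S \<noteq> {}}. \<alpha> \<xi> S * xE x S) + nu d C b \<alpha> \<beta>"
proof -
  note S = SR[unfolded SRI_def, simplified]
  note A = AB[unfolded Aset_def, simplified]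
  define cv where "cv \<xi> v = \<beta> \<xi> v + (\<Sum>S\<in>{S. v \<in> S}. \<alpha> \<xi> S)" for \<xi> v
  have "(\<Sum>\<xi>\<in>UNIV. \<Sum>S\<in>{S. S \<noteq> {}}. \<alpha> \<xi> S * xE x S) + nu d C b \<alpha> \<beta>
      = (\<Sum>\<xi>\<in>UNIV. (\<Sum>S\<in>{S. S \<noteq> {}}. \<alpha> \<xi> S * (of_int (kk d C \<xi> S) + xE x S - real (card S)))
            + (\<Sum>v\<in>UNIV. \<beta> \<xi> v * real (b v)))"
    by (simp add: nu_def sum.distrib[symmetric] algebra_simps)
  also have "\<dots> \<le> (\<Sum>\<xi>\<in>UNIV. \<Sum>v\<in>UNIV. y \<xi> v * cv \<xi> v)"
  proof (rule sum_mono)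
    fix \<xi> :: 's
    have 1: "(\<Sum>S\<in>{S. S \<noteq> {}}. \<alpha> \<xi> S * (of_int (kk d C \<xi> S) + xE x S - real (card S)))
        \<le> (\<Sum>S\<in>{S. S \<noteq> {}}. \<Sum>v\<in>S. \<alpha> \<xi> S * y \<xi> v)"
    proof (rule sum_mono)
      fix S :: "'c set" assume "S \<in> {S. S \<noteq> {}}"
      then have "S \<noteq> {}" by simp
      then have "of_int (kk d C \<xi> S) + xE x S - real (card S) \<le> (\<Sum>v\<in>S. y \<xi> v)"
        using S by auto
      moreover have "0 \<le> \<alpha> \<xi> S" using A \<open>S \<noteq> {}\<close> by auto
      ultimately show "\<alpha> \<xi> S * (of_int (kk d C \<xi> S) + xE x S - real (card S)) \<le> (\<Sum>v\<in>S. \<alpha> \<xi> S * y \<xi> v)"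
        by (simp add: sum_distrib_left[symmetric] mult_left_mono)
    qed
    have 2: "(\<Sum>v\<in>UNIV. \<beta> \<xi> v * real (b v)) \<le> (\<Sum>v\<in>UNIV. \<beta> \<xi> v * y \<xi> v)"
      by (rule sum_mono) (use A S in \<open>auto intro: mult_left_mono_neg\<close>)
    have 3: "(\<Sum>S\<in>{S. S \<noteq> {}}. \<Sum>v\<in>S. \<alpha> \<xi> S * y \<xi> v) = (\<Sum>v\<in>UNIV. \<Sum>S\<in>{S. v \<in> S}. \<alpha> \<xi> S * y \<xi> v)"
      by (rule swap_sets)
    have 4: "(\<Sum>v\<in>UNIV. y \<xi> v * cv \<xi> v) = (\<Sum>v\<in>UNIV. \<Sum>S\<in>{S. v \<in> S}. \<alpha> \<xi> S * y \<xi> v) + (\<Sum>v\<in>UNIV. \<beta> \<xi> v * y \<xi> v)"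
      by (simp add: cv_def algebra_simps sum.distrib sum_distrib_left)
    show "(\<Sum>S\<in>{S. S \<noteq> {}}. \<alpha> \<xi> S * (of_int (kk d C \<xi> S) + xE x S - real (card S))) + (\<Sum>v\<in>UNIV. \<beta> \<xi> v * real (b v))
        \<le> (\<Sum>v\<in>UNIV. y \<xi> v * cv \<xi> v)"
      using 1 2 3 4 by linarith
  qed
  also have "\<dots> = (\<Sum>v\<in>UNIV. \<Sum>\<xi>\<in>UNIV. y \<xi> v * cv \<xi> v)"
    by (rule sum.swap)
  also have "\<dots> \<le> (\<Sum>v\<in>UNIV. if w v > 0 then phi p w v \<alpha> \<beta> * \<theta> v else 0)"
  proof (rule sum_mono)
    fix v :: 'c
    show "(\<Sum>\<xi>\<in>UNIV. y \<xi> v * cv \<xi> v) \<le> (if w v > 0 then phi p w v \<alpha> \<beta> * \<theta> v else 0)"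
    proof (cases "w v > 0")
      case False
      then have "w v = 0" using w_nonneg by (metis less_eq_real_def)
      then have "\<forall>\<xi>. cv \<xi> v \<le> 0" using A by (simp add: cv_def)
      then have "(\<Sum>\<xi>\<in>UNIV. y \<xi> v * cv \<xi> v) \<le> 0"
        using S by (auto intro!: sum_nonpos mult_nonneg_nonpos)
      then show ?thesis using False by simp
    next
      case True
      define ph where "ph = phi p w v \<alpha> \<beta>"
      have ph0: "0 \<le> ph" by (simp add: ph_def phi_def)
      have le: "cv \<xi> v \<le> ph * (p \<xi> * w v)" for \<xi>
      proof -
        have pw: "0 < p \<xi> * w v" using p_pos True by simp
        have "cv \<xi> v / (p \<xi> * w v) \<le> Max ((\<lambda>\<xi>. (\<beta> \<xi> v + (\<Sum>S\<in>{S. v \<in> S}. \<alpha> \<xi> S)) / (p \<xi> * w v)) ` UNIV)"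
          by (rule Max_ge) (auto simp: cv_def)
        also have "\<dots> \<le> ph" by (simp add: ph_def phi_def)
        finally show ?thesis using pw by (simp add: divide_le_eq)
      qed
      have "(\<Sum>\<xi>\<in>UNIV. y \<xi> v * cv \<xi> v) \<le> (\<Sum>\<xi>\<in>UNIV. ph * (p \<xi> * w v * y \<xi> v))"
      proof (rule sum_mono)
        fix \<xi>
        have "y \<xi> v * cv \<xi> v \<le> y \<xi> v * (ph * (p \<xi> * w v))"
          using le[of \<xi>] S by (auto intro: mult_left_mono)
        then show "y \<xi> v * cv \<xi> v \<le> ph * (p \<xi> * w v * y \<xi> v)" by (simp add: algebra_simps)
      qed
      also have "\<dots> = ph * (\<Sum>\<xi>\<in>UNIV. p \<xi> * w v * y \<xi> v)" by (simp add: sum_distrib_left)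
      also have "\<dots> \<le> ph * \<theta> v" using S ph0 by (auto intro: mult_left_mono)
      finally show ?thesis using True by (simp add: ph_def)
    qed
  qed
  also have "\<dots> = (\<Sum>v\<in>{v. w v > 0}. phi p w v \<alpha> \<beta> * \<theta> v)"
    by (simp add: sum.If_cases)
  finally show ?thesis .
qed


lemma sum_delta_pair:
  fixes f :: "'a::finite \<times> 'b::finite \<Rightarrow> real"
  shows "(\<Sum>k\<in>UNIV. f k * (if j = k then c else 0)) = f j * c"
  by (simp add: if_distrib[of "\<lambda>t. f _ * t"] sum.delta cong: if_cong)

lemma sum_sets_pair:
  fixes f :: "'a::finite \<times> 'b::finite set \<Rightarrow> real"
  shows "(\<Sum>k\<in>UNIV. f k * (if fst j = fst k \<and> snd j \<in> snd k then 1 else 0))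
       = (\<Sum>S\<in>{S. snd j \<in> S}. f (fst j, S))"
proof -
  have "(\<Sum>k\<in>UNIV. f k * (if fst j = fst k \<and> snd j \<in> snd k then 1 else 0))
      = (\<Sum>a\<in>UNIV. \<Sum>S\<in>UNIV. (if a = fst j then (if snd j \<in> S then f (a, S) else 0) else 0))"
    by (subst sum_UNIV_prod) (auto intro!: sum.cong)
  also have "\<dots> = (\<Sum>a\<in>UNIV. if a = fst j then (\<Sum>S\<in>UNIV. (if snd j \<in> S then f (a, S) else 0)) else 0)"
    by (rule sum.cong) simp_all
  also have "\<dots> = (\<Sum>S\<in>UNIV. (if snd j \<in> S then f (fst j, S) else 0))"
    by (simp add: sum.delta')
  also have "\<dots> = (\<Sum>S\<in>{S. snd j \<in> S}. f (fst j, S))"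
    by (simp add: sum.If_cases)
  finally show ?thesis .
qed

lemma sum_v_pair:
  fixes f :: "'a::finite \<times> 'b::finite \<Rightarrow> real"
  shows "(\<Sum>k\<in>UNIV. (if fst k = \<xi> \<and> snd k \<in> S then 1 else 0) * f k) = (\<Sum>v\<in>S. f (\<xi>, v))"
proof -
  have "(\<Sum>k\<in>UNIV. (if fst k = \<xi> \<and> snd k \<in> S then 1 else 0) * f k)
      = (\<Sum>a\<in>UNIV. \<Sum>v\<in>UNIV. (if a = \<xi> then (if v \<in> S then f (a, v) else 0) else 0))"
    by (subst sum_UNIV_prod) (auto intro!: sum.cong)
  also have "\<dots> = (\<Sum>a\<in>UNIV. if a = \<xi> then (\<Sum>v\<in>UNIV. (if v \<in> S then f (a, v) else 0)) else 0)"
    by (rule sum.cong) simp_all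
  also have "\<dots> = (\<Sum>v\<in>UNIV. (if v \<in> S then f (\<xi>, v) else 0))"
    by (simp add: sum.delta')
  also have "\<dots> = (\<Sum>v\<in>S. f (\<xi>, v))"
    by (simp add: sum.If_cases)
  finally show ?thesis .
qed


lemma delta_left:
  fixes f :: "'a::finite \<Rightarrow> real"
  shows "(\<Sum>j\<in>UNIV. (if j = k then c else 0) * f j) = c * f k"
  by (simp add: if_distrib[of "\<lambda>t. t * f _"] sum.delta cong: if_cong)

lemma delta_right:
  fixes f :: "'a::finite \<Rightarrow> real"
  shows "(\<Sum>k\<in>UNIV. f k * (if j = k then c k else 0)) = f j * c j"
  by (simp add: if_distrib[of "\<lambda>t. f _ * t"] sum.delta' cong: if_cong)

lemma sum_theta_pair:
  fixes f :: "'a::finite \<times> 'b::finite \<Rightarrow> real"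
  shows "(\<Sum>j\<in>UNIV. (if snd j = v then g (fst j) else 0) * f j) = (\<Sum>\<xi>\<in>UNIV. g \<xi> * f (\<xi>, v))"
proof -
  have "(\<Sum>j\<in>UNIV. (if snd j = v then g (fst j) else 0) * f j)
     = (\<Sum>\<xi>\<in>UNIV. \<Sum>u\<in>UNIV. (if u = v then g \<xi> else 0) * f (\<xi>, u))"
    by (simp only: sum_UNIV_prod fst_conv snd_conv)
  also have "\<dots> = (\<Sum>\<xi>\<in>UNIV. g \<xi> * f (\<xi>, v))"
    by (rule sum.cong[OF refl], rule delta_left)
  finally show ?thesis .
qed

lemma bwd:
  fixes p :: "'s::finite \<Rightarrow> real" and d :: "'s \<Rightarrow> 'c::finite \<Rightarrow> real"
  assumes p_pos: "\<forall>\<xi>. 0 < p \<xi>" and w_nonneg: "\<forall>v. 0 \<le> w v"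
    and T: "\<theta> \<in> cutset p d C w b x"
  shows "\<exists>y. (\<theta>, y) \<in> SRI p d C w b x"
proof -
  note TT = T[unfolded cutset_def, simplified]
  define A :: "(('s\<times>'c) + ('s\<times>'c) + ('s\<times>'c set) + 'c) \<Rightarrow> ('s\<times>'c) \<Rightarrow> real" where
    "A i j = (case i of Inl k \<Rightarrow> (if j = k then 1 else 0)
       | Inr (Inl k) \<Rightarrow> (if j = k then -1 else 0)
       | Inr (Inr (Inl k)) \<Rightarrow> (if fst j = fst k \<and> snd j \<in> snd k then 1 else 0)
       | Inr (Inr (Inr v)) \<Rightarrow> (if snd j = v then - (p (fst j) * w v) else 0))" for i j
  define c :: "(('s\<times>'c) + ('s\<times>'c) + ('s\<times>'c set) + 'c) \<Rightarrow> real" where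
    "c i = (case i of Inl k \<Rightarrow> 0
       | Inr (Inl k) \<Rightarrow> - real (b (snd k))
       | Inr (Inr (Inl k)) \<Rightarrow> of_int (kk d C (fst k) (snd k)) + xE x (snd k) - real (card (snd k))
       | Inr (Inr (Inr v)) \<Rightarrow> - \<theta> v)" for i
  have "\<exists>y::'s\<times>'c\<Rightarrow>real. \<forall>i\<in>UNIV. (\<Sum>j\<in>UNIV. A i j * y j) \<ge> c i"
  proof (rule farkas_fun)
    fix l assume l0: "\<forall>i\<in>UNIV. 0 \<le> l i" and eq: "\<forall>j. (\<Sum>i\<in>UNIV. l i * A i j) = 0"
    define \<alpha> where "\<alpha> \<xi> S = l (Inr (Inr (Inl (\<xi>, S))))" for \<xi> S
    define \<beta> where "\<beta> \<xi> v = - l (Inr (Inl (\<xi>, v)))" for \<xi> v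
    define \<gamma> where "\<gamma> v = l (Inr (Inr (Inr v)))" for v
    define \<mu> where "\<mu> \<xi> v = l (Inl (\<xi>, v))" for \<xi> v
    have eqj: "\<mu> \<xi> v + \<beta> \<xi> v + (\<Sum>S\<in>{S. v \<in> S}. \<alpha> \<xi> S) - \<gamma> v * (p \<xi> * w v) = 0" for \<xi> v
    proof -
      have "(\<Sum>i\<in>UNIV. l i * A i (\<xi>, v)) = 0" using eq by blast
      moreover note sum_sets_pair[of "\<lambda>k. l (Inr (Inr (Inl k)))" "(\<xi>, v)", simplified]
      ultimately show ?thesis
        by (simp add: sum_UNIV_sum A_def delta_right \<alpha>_def \<beta>_def \<gamma>_def \<mu>_def)
    qed
    define r where "r \<xi> S = of_int (kk d C \<xi> S) + xE x S - real (card S)" for \<xi> S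
    have r0: "(\<Sum>S\<in>UNIV. \<alpha> \<xi> S * r \<xi> S) = (\<Sum>S\<in>{S. S \<noteq> {}}. \<alpha> \<xi> S * r \<xi> S)" for \<xi>
      by (rule sum.mono_neutral_right) (auto simp: r_def kk_empty xE_empty)
    have csum: "(\<Sum>i\<in>UNIV. l i * c i) = (\<Sum>\<xi>\<in>UNIV. \<Sum>v\<in>UNIV. \<beta> \<xi> v * real (b v))
        + (\<Sum>\<xi>\<in>UNIV. \<Sum>S\<in>UNIV. \<alpha> \<xi> S * r \<xi> S) - (\<Sum>v\<in>UNIV. \<gamma> v * \<theta> v)"
      by (simp add: sum_UNIV_sum sum_UNIV_prod c_def \<alpha>_def \<beta>_def \<gamma>_def r_def sum_negf)
    have AB: "(\<alpha>, \<beta>) \<in> Aset w"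
      unfolding Aset_def
    proof (simp, intro conjI allI impI)
      show "0 \<le> \<alpha> \<xi> S" for \<xi> S using l0 by (simp add: \<alpha>_def)
      show "\<beta> \<xi> v \<le> 0" for \<xi> v using l0 by (simp add: \<beta>_def)
      show "\<beta> \<xi> v + sum (\<alpha> \<xi>) {S. v \<in> S} \<le> 0" if "w v = 0" for \<xi> v
      proof -
        have "0 \<le> l (Inl (\<xi>, v))" using l0 by simp
        then show ?thesis using eqj[of \<xi> v] that by (simp add: \<mu>_def)
      qed
    qed
    have cut: "(\<Sum>v\<in>{v. w v > 0}. phi p w v \<alpha> \<beta> * \<theta> v)
          \<ge> (\<Sum>\<xi>\<in>UNIV. \<Sum>S\<in>{S. S \<noteq> {}}. \<alpha> \<xi> S * xE x S) + nu d C b \<alpha> \<beta>"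
      using TT AB by blast
    have nueq: "(\<Sum>\<xi>\<in>UNIV. \<Sum>S\<in>{S. S \<noteq> {}}. \<alpha> \<xi> S * xE x S) + nu d C b \<alpha> \<beta>
        = (\<Sum>\<xi>\<in>UNIV. \<Sum>v\<in>UNIV. \<beta> \<xi> v * real (b v)) + (\<Sum>\<xi>\<in>UNIV. \<Sum>S\<in>UNIV. \<alpha> \<xi> S * r \<xi> S)"
      by (simp only: r0) (simp add: nu_def r_def sum.distrib[symmetric] algebra_simps)
    have phg: "phi p w v \<alpha> \<beta> \<le> \<gamma> v" if "w v > 0" for v
    proof -
      have g0: "0 \<le> \<gamma> v" using l0 by (simp add: \<gamma>_def)
      have "(\<beta> \<xi> v + (\<Sum>S\<in>{S. v \<in> S}. \<alpha> \<xi> S)) / (p \<xi> * w v) \<le> \<gamma> v" for \<xi>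
      proof -
        have pw: "0 < p \<xi> * w v" using p_pos that by simp
        have "\<beta> \<xi> v + (\<Sum>S\<in>{S. v \<in> S}. \<alpha> \<xi> S) \<le> \<gamma> v * (p \<xi> * w v)"
        proof -
          have "0 \<le> l (Inl (\<xi>, v))" using l0 by simp
          then show ?thesis using eqj[of \<xi> v] by (simp add: \<mu>_def)
        qed
        then show ?thesis using pw by (simp add: divide_le_eq)
      qed
      then have "Max ((\<lambda>\<xi>. (\<beta> \<xi> v + (\<Sum>S\<in>{S. v \<in> S}. \<alpha> \<xi> S)) / (p \<xi> * w v)) ` UNIV) \<le> \<gamma> v"
        by (subst Max_le_iff) auto
      then show ?thesis using g0 by (simp add: phi_def)
    qed
    have "(\<Sum>v\<in>{v. w v > 0}. phi p w v \<alpha> \<beta> * \<theta> v) \<le> (\<Sum>v\<in>{v. w v > 0}. \<gamma> v * \<theta> v)"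
      by (rule sum_mono) (use phg TT in \<open>auto intro: mult_right_mono\<close>)
    also have "\<dots> \<le> (\<Sum>v\<in>UNIV. \<gamma> v * \<theta> v)"
      by (rule sum_mono2) (use l0 TT in \<open>auto simp: \<gamma>_def\<close>)
    finally show "(\<Sum>i\<in>UNIV. l i * c i) \<le> 0"
      using csum cut nueq by linarith
  qed simp
  then obtain y0 :: "'s\<times>'c\<Rightarrow>real" where y0: "\<forall>i. (\<Sum>j\<in>UNIV. A i j * y0 j) \<ge> c i" by blast
  define y where "y \<xi> v = y0 (\<xi>, v)" for \<xi> v
  have "(\<theta>, y) \<in> SRI p d C w b x"
    unfolding SRI_def
  proof (simp, intro conjI allI impI)
    show "0 \<le> \<theta> v" for v using TT by simp
    show "0 \<le> y \<xi> v" for \<xi> v using y0[rule_format, of "Inl (\<xi>, v)"]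
      by (simp add: A_def c_def delta_left y_def)
    show "y \<xi> v \<le> real (b v)" for \<xi> v using y0[rule_format, of "Inr (Inl (\<xi>, v))"]
      by (simp add: A_def c_def delta_left y_def)
    show "of_int (kk d C \<xi> S) + xE x S - real (card S) \<le> sum (y \<xi>) S" for \<xi> S
      using y0[rule_format, of "Inr (Inr (Inl (\<xi>, S)))"]
      by (simp add: A_def c_def sum_v_pair y_def)
    show "(\<Sum>\<xi>\<in>UNIV. p \<xi> * w v * y \<xi> v) \<le> \<theta> v" for v
      using y0[rule_format, of "Inr (Inr (Inr v))"]
        sum_theta_pair[of v "\<lambda>\<xi>. - (p \<xi> * w v)" y0]
      by (simp add: A_def c_def y_def sum_negf)
  qed
  then show ?thesis by blast
qed

theorem proposition3:
  fixes p :: "'s::finite \<Rightarrow> real"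
    and d :: "'s \<Rightarrow> 'c::finite \<Rightarrow> real"
    and C :: real
    and w :: "'c \<Rightarrow> real"
    and b :: "'c \<Rightarrow> nat"
    and X :: "('c option set \<Rightarrow> real) set"
  assumes C_pos: "C > 0"
    and d_rat: "\<forall>\<xi> v. d \<xi> v \<in> \<rat>"
    and d_nonneg: "\<forall>\<xi> v. 0 \<le> d \<xi> v"
    and d_le_C: "\<forall>\<xi> v. d \<xi> v \<le> C"
    and p_pos: "\<forall>\<xi>. 0 < p \<xi>"
    and p_sum: "(\<Sum>\<xi>\<in>UNIV. p \<xi>) = 1"
    and w_rat: "\<forall>v. w v \<in> \<rat>"
    and w_nonneg: "\<forall>v. 0 \<le> w v"
    and X_choice: "X = Xsub \<or> (\<exists>k. X = Xcvrp p d C k)"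
  shows "(\<forall>xbar\<in>X. proj_theta (SRI p d C w b xbar) = cutset p d C w b xbar)
         \<and> Pset X p d C w b = {(x, \<theta>). x \<in> X \<and> \<theta> \<in> cutset p d C w b x}"
  proof -
  have p_pos': "\<forall>\<xi>. 0 < p \<xi>" using p_pos .
  have 1: "\<forall>xbar\<in>X. proj_theta (SRI p d C w b xbar) = cutset p d C w b xbar"
  proof
    fix xbar
    show "proj_theta (SRI p d C w b xbar) = cutset p d C w b xbar"
    proof
      show "proj_theta (SRI p d C w b xbar) \<subseteq> cutset p d C w b xbar"
      proof
        fix \<theta> assume "\<theta> \<in> proj_theta (SRI p d C w b xbar)"
        then obtain y where SR: "(\<theta>, y) \<in> SRI p d C w b xbar"
          unfolding proj_theta_def by force
        then have "\<forall>v. 0 \<le> \<theta> v" unfolding SRI_def by simp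
        moreover have "\<forall>(\<alpha>, \<beta>) \<in> Aset w.
            (\<Sum>v\<in>{v. w v > 0}. phi p w v \<alpha> \<beta> * \<theta> v)
              \<ge> (\<Sum>\<xi>\<in>UNIV. \<Sum>S\<in>{S. S \<noteq> {}}. \<alpha> \<xi> S * xE xbar S) + nu d C b \<alpha> \<beta>"
          using fwd[OF p_pos w_nonneg SR] by blast
        ultimately show "\<theta> \<in> cutset p d C w b xbar" unfolding cutset_def by blast
      qed
    next
      show "cutset p d C w b xbar \<subseteq> proj_theta (SRI p d C w b xbar)"
      proof
        fix \<theta> assume "\<theta> \<in> cutset p d C w b xbar"
        then obtain y where "(\<theta>, y) \<in> SRI p d C w b xbar" using bwd[OF p_pos w_nonneg] by blast
        then show "\<theta> \<in> proj_theta (SRI p d C w b xbar)" unfolding proj_theta_def by force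
      qed
    qed
  qed
  moreover have "Pset X p d C w b = {(x, \<theta>). x \<in> X \<and> \<theta> \<in> cutset p d C w b x}"
    using 1 unfolding Pset_def by auto
  ultimately show ?thesis by blast
qed

end
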